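(* As $s\to 1^+$ (real $s$), $$\lim_{s\to1^+}(s-1)\prod_{p\equiv 1 \pmod 3}\left(1-\frac{1}{p^s}\right)^{-2}=\frac{\sqrt3}{2\pi}\prod_{p\equiv 1\pmod 3}\left(1-\frac{1}{p^2}\right)^{-1},$$ i.e. $\prod_{p\equiv 1 \pmod 3}(1-p^{-s})^{-2}\sim \zeta(s)\frac{\sqrt3}{2\pi}\prod_{p\equiv 1\pmod 3}(1-p^{-2})^{-1}$, where products are over primes $p\equiv1\pmod 3$ and $\zeta$ is the Riemann zeta function. *)

theory Defs
  imports "HOL-Analysis.Analysis"
begin

definition prod_p1mod3 :: "(nat \<Rightarrow> real) \<Rightarrow> real" where
  "prod_p1mod3 g = (\<Prod>n. if prime n \<and> n mod 3 = 1 then g n else 1)"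

end

theory Submission
  imports Defs
begin

definition smooth :: "nat set \<Rightarrow> nat set" where
  "smooth A = {n. n > 0 \<and> prime_factors n \<subseteq> A}"

lemma infsum_eq_suminf_nat:
  fixes f :: "nat \<Rightarrow> real"
  assumes "f summable_on UNIV" shows "infsum f UNIV = suminf f"
  using has_sum_imp_sums[OF has_sum_infsum[OF assms]] sums_unique by metis

lemma cmult_prod:
  fixes g :: "nat \<Rightarrow> real"
  assumes g1: "g 1 = 1" and gm: "\<And>m n. g (m*n) = g m * g n"
  shows "finite A \<Longrightarrow> g (\<Prod>i\<in>A. f i) = (\<Prod>i\<in>A. g (f i))"
proof -
  have g1': "g (Suc 0) = 1" using g1 by simp
  show "finite A \<Longrightarrow> g (\<Prod>i\<in>A. f i) = (\<Prod>i\<in>A. g (f i))"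
    by (induction A rule: finite_induct) (auto simp: g1' gm)
qed

lemma cmult_power:
  fixes g :: "nat \<Rightarrow> real"
  assumes g1: "g 1 = 1" and gm: "\<And>m n. g (m*n) = g m * g n"
  shows "g (p ^ k) = g p ^ k"
proof -
  have g1': "g (Suc 0) = 1" using g1 by simp
  show ?thesis by (induction k) (auto simp: g1' gm)
qed

lemma smooth_image:
  assumes fin: "finite A" and pr: "\<And>p. p \<in> A \<Longrightarrow> prime p"
  defines "h \<equiv> (\<lambda>e. \<Prod>p\<in>A. p ^ e p)"
  shows "inj_on h (PiE A (\<lambda>_. UNIV))" and "h ` (PiE A (\<lambda>_. UNIV)) = smooth A"
proof -
  have mult: "multiplicity q (h e) = (if q \<in> A then e q else 0)" if "prime q" for q e
    unfolding h_def using multiplicity_prod_prime_powers[OF fin pr that] by blast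
  show "inj_on h (PiE A (\<lambda>_. UNIV))"
  proof (rule inj_onI)
    fix x y assume x: "x \<in> PiE A (\<lambda>_. UNIV)" and y: "y \<in> PiE A (\<lambda>_. UNIV)" and e: "h x = h y"
    show "x = y"
    proof (rule PiE_ext[OF x y])
      fix i assume i: "i \<in> A"
      from mult[OF pr[OF i], of x] mult[OF pr[OF i], of y] e i show "x i = y i" by simp
    qed
  qed
  have hpos: "h e > 0" for e
    unfolding h_def using pr fin by (auto intro!: prod_pos simp: prime_gt_0_nat)
  show "h ` (PiE A (\<lambda>_. UNIV)) = smooth A"
  proof
    show "h ` (PiE A (\<lambda>_. UNIV)) \<subseteq> smooth A"
    proof
      fix n assume "n \<in> h ` (PiE A (\<lambda>_. UNIV))"
      then obtain e where n: "n = h e" by auto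
      have "prime_factors n \<subseteq> A"
      proof
        fix q assume "q \<in> prime_factors n"
        then have "prime q" "multiplicity q n > 0" by (auto simp: prime_factors_multiplicity)
        with mult[of q e] n show "q \<in> A" by (auto split: if_splits)
      qed
      with hpos n show "n \<in> smooth A" by (auto simp: smooth_def)
    qed
  next
    show "smooth A \<subseteq> h ` (PiE A (\<lambda>_. UNIV))"
    proof
      fix n assume n: "n \<in> smooth A"
      then have n0: "n > 0" and sub: "prime_factors n \<subseteq> A" by (auto simp: smooth_def)
      define e where "e = restrict (\<lambda>p. multiplicity p n) A"
      have "n = (\<Prod>p\<in>prime_factors n. p ^ multiplicity p n)"
        using prime_factorization_nat[OF n0] .
      also have "\<dots> = (\<Prod>p\<in>A. p ^ multiplicity p n)"
      proof (rule prod.mono_neutral_left[OF fin sub])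
        show "\<forall>i\<in>A - prime_factors n. i ^ multiplicity i n = 1"
          using pr by (auto simp: prime_factors_multiplicity)
      qed
      also have "\<dots> = h e" unfolding h_def e_def by (rule prod.cong) auto
      finally show "n \<in> h ` (PiE A (\<lambda>_. UNIV))" unfolding e_def by auto
    qed
  qed
qed

lemma geom_abs_summable:
  fixes z :: real assumes "\<bar>z\<bar> < 1"
  shows "(\<lambda>k. norm (z ^ k)) summable_on UNIV" and "infsum (\<lambda>k. z ^ k) UNIV = inverse (1 - z)"
proof -
  have "summable (\<lambda>n. norm (norm (z ^ n)))"
    using assms by (simp add: power_abs summable_geometric)
  then show a: "(\<lambda>k. norm (z ^ k)) summable_on UNIV"
    using norm_summable_imp_summable_on by fastforce
  have "(\<lambda>k. z ^ k) summable_on UNIV" using abs_summable_summable[OF a] .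
  then have "infsum (\<lambda>k. z ^ k) UNIV = (\<Sum>k. z ^ k)" by (rule infsum_eq_suminf_nat)
  also have "\<dots> = 1 / (1 - z)" using geometric_sums[of z] assms by (simp add: sums_iff)
  finally show "infsum (\<lambda>k. z ^ k) UNIV = inverse (1 - z)" by (simp add: field_simps)
qed

lemma infsum_smooth:
  fixes g :: "nat \<Rightarrow> real"
  assumes g1: "g 1 = 1" and gm: "\<And>m n. g (m*n) = g m * g n"
    and gp: "\<And>p. prime p \<Longrightarrow> \<bar>g p\<bar> < 1"
    and fin: "finite A" and pr: "\<And>p. p \<in> A \<Longrightarrow> prime p"
  shows "infsum g (smooth A) = (\<Prod>p\<in>A. inverse (1 - g p))"
proof -
  define h where "h = (\<lambda>e. \<Prod>p\<in>A. p ^ e p)"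
  have inj: "inj_on h (PiE A (\<lambda>_. UNIV))" and im: "h ` (PiE A (\<lambda>_. UNIV)) = smooth A"
    using smooth_image[OF fin pr] unfolding h_def by auto
  have "infsum g (smooth A) = infsum (g \<circ> h) (PiE A (\<lambda>_. UNIV))"
    using infsum_reindex[OF inj, of g] im by simp
  also have "\<dots> = infsum (\<lambda>e. \<Prod>p\<in>A. g p ^ e p) (PiE A (\<lambda>_. UNIV))"
    by (rule infsum_cong) (simp add: h_def cmult_prod[OF g1 gm fin] cmult_power[OF g1 gm])
  also have "\<dots> = (\<Prod>p\<in>A. infsum (\<lambda>k. g p ^ k) UNIV)"
    by (rule infsum_prod_PiE_abs[OF fin]) (use geom_abs_summable gp pr in auto)
  also have "\<dots> = (\<Prod>p\<in>A. inverse (1 - g p))"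
    by (rule prod.cong) (use geom_abs_summable gp pr in auto)
  finally show ?thesis .
qed

lemma euler_product:
  fixes g :: "nat \<Rightarrow> real"
  assumes g0: "g 0 = 0" and g1: "g 1 = 1" and gm: "\<And>m n. g (m*n) = g m * g n"
    and gs: "summable (\<lambda>n. \<bar>g n\<bar>)" and gp: "\<And>p. prime p \<Longrightarrow> \<bar>g p\<bar> < 1"
    and nz: "(\<Sum>n. g n) \<noteq> 0"
  shows "(\<lambda>n. if prime n then inverse (1 - g n) else 1) has_prod (\<Sum>n. g n)"
proof -
  define F where "F = (\<lambda>n. if prime n then inverse (1 - g n) else 1)"
  have gsum: "g summable_on UNIV"
    using norm_summable_imp_summable_on[of g] gs by simp
  have gabs: "(\<lambda>n. \<bar>g n\<bar>) summable_on UNIV"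
    using norm_summable_imp_summable_on[of "\<lambda>n. \<bar>g n\<bar>"] gs by simp
  have gsumv: "infsum g UNIV = (\<Sum>n. g n)" by (rule infsum_eq_suminf_nat[OF gsum])
  have gabsv: "infsum (\<lambda>n. \<bar>g n\<bar>) UNIV = (\<Sum>n. \<bar>g n\<bar>)" by (rule infsum_eq_suminf_nat[OF gabs])
  define A where "A N = {p. prime p \<and> p \<le> N}" for N :: nat
  define S where "S N = insert 0 (smooth (A N))" for N
  have finA: "finite (A N)" for N unfolding A_def by auto
  have P: "(\<Prod>i\<le>N. F i) = infsum g (S N)" for N
  proof -
    have "(\<Prod>i\<le>N. F i) = (\<Prod>i\<in>{i\<in>{..N}. prime i}. inverse (1 - g i))"
      unfolding F_def by (rule prod.inter_filter[symmetric]) simp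
    also have "{i\<in>{..N}. prime i} = A N" unfolding A_def by auto
    also have "(\<Prod>i\<in>A N. inverse (1 - g i)) = infsum g (smooth (A N))"
      by (rule infsum_smooth[OF g1 gm gp finA, symmetric]) (auto simp: A_def)
    also have "\<dots> = infsum g (S N)" unfolding S_def
      by (subst infsum_insert) (auto simp: g0 smooth_def intro: summable_on_subset_banach[OF gsum])
    finally show ?thesis .
  qed
  have sub: "{..N} \<subseteq> S N" for N
  proof
    fix n assume n: "n \<in> {..N}"
    show "n \<in> S N"
    proof (cases "n = 0")
      case False
      have "prime_factors n \<subseteq> A N"
      proof
        fix p assume p: "p \<in> prime_factors n"
        then have "p dvd n" "prime p" by auto
        with False have "p \<le> n" by (auto intro: dvd_imp_le)
        with n \<open>prime p\<close> show "p \<in> A N" by (auto simp: A_def)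
      qed
      with False show ?thesis by (auto simp: S_def smooth_def)
    qed (auto simp: S_def)
  qed
  have bound: "norm ((\<Prod>i\<le>N. F i) - (\<Sum>n. g n)) \<le> (\<Sum>n. \<bar>g n\<bar>) - (\<Sum>n\<le>N. \<bar>g n\<bar>)" for N
  proof -
    have sS: "g summable_on S N" by (rule summable_on_subset_banach[OF gsum]) auto
    have "(\<Sum>n. g n) - (\<Prod>i\<le>N. F i) = infsum g UNIV - infsum g (S N)" using P gsumv by simp
    also have "\<dots> = infsum g (UNIV - S N)" by (rule infsum_Diff[symmetric]) (use gsum sS in auto)
    finally have eq: "(\<Sum>n. g n) - (\<Prod>i\<le>N. F i) = infsum g (UNIV - S N)" .
    have "norm (infsum g (UNIV - S N)) \<le> infsum (\<lambda>n. norm (g n)) (UNIV - S N)"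
      by (rule norm_infsum_bound) (use summable_on_subset_banach[OF gabs] in auto)
    also have "\<dots> = infsum (\<lambda>n. \<bar>g n\<bar>) (UNIV - S N)" by simp
    also have "\<dots> \<le> infsum (\<lambda>n. \<bar>g n\<bar>) (UNIV - {..N})"
      by (rule infsum_mono2) (use summable_on_subset_banach[OF gabs] sub in auto)
    also have "\<dots> = infsum (\<lambda>n. \<bar>g n\<bar>) UNIV - infsum (\<lambda>n. \<bar>g n\<bar>) {..N}"
      by (rule infsum_Diff) (use gabs in auto)
    also have "\<dots> = (\<Sum>n. \<bar>g n\<bar>) - (\<Sum>n\<le>N. \<bar>g n\<bar>)" using gabsv by simp
    finally show ?thesis using eq by (simp add: norm_minus_commute)
  qed
  have lim0: "(\<lambda>N. (\<Sum>n. \<bar>g n\<bar>) - (\<Sum>n\<le>N. \<bar>g n\<bar>)) \<longlonglongrightarrow> 0"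
    using tendsto_diff[OF tendsto_const summable_LIMSEQ'[OF gs], of "\<Sum>n. \<bar>g n\<bar>"] by simp
  have "(\<lambda>N. (\<Prod>i\<le>N. F i) - (\<Sum>n. g n)) \<longlonglongrightarrow> 0"
    by (rule Lim_null_comparison[OF _ lim0]) (use bound in auto)
  then have "(\<lambda>N. \<Prod>i\<le>N. F i) \<longlonglongrightarrow> (\<Sum>n. g n)"
    by (simp add: LIM_zero_iff)
  then have "raw_has_prod F 0 (\<Sum>n. g n)"
    using nz by (simp add: raw_has_prod_def)
  then show ?thesis unfolding F_def has_prod_def by blast
qed

definition chi :: "nat \<Rightarrow> real" where
  "chi n = (if n mod 3 = 1 then 1 else if n mod 3 = 2 then -1 else 0)"

definition gC :: "nat \<Rightarrow> real \<Rightarrow> nat \<Rightarrow> real" where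
  "gC c \<sigma> n = (if (\<forall>p\<in>prime_factors n. p mod 3 = c) then real n powr -\<sigma> else 0)"

definition Zt :: "real \<Rightarrow> real" where "Zt \<sigma> = (\<Sum>n. real n powr -\<sigma>)"
definition Lf :: "real \<Rightarrow> real" where "Lf \<sigma> = (\<Sum>n. chi n * real n powr -\<sigma>)"
definition G :: "nat \<Rightarrow> real \<Rightarrow> real" where "G c \<sigma> = (\<Sum>n. gC c \<sigma> n)"

lemma chi_mult: "chi (m * n) = chi m * chi n"
proof -
  define a where "a = m mod 3"
  define b where "b = n mod 3"
  have ab: "a < 3" "b < 3" unfolding a_def b_def by auto
  have e: "(m * n) mod 3 = (a * b) mod 3" unfolding a_def b_def by (simp add: mod_mult_eq)
  have "a = 0 \<or> a = 1 \<or> a = 2" "b = 0 \<or> b = 1 \<or> b = 2" using ab by auto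
  then show ?thesis unfolding chi_def using e a_def b_def by auto
qed

lemma abs_chi_le: "\<bar>chi n\<bar> \<le> 1" by (simp add: chi_def)

lemma powr_mult_nat: "real (m * n) powr s = real m powr s * real n powr s"
  by (simp add: powr_mult)

lemma prime_powr_less1:
  assumes "prime p" "\<sigma> > 0" shows "real p powr -\<sigma> < 1"
proof -
  have "real p > 1" using prime_gt_1_nat[OF assms(1)] by simp
  then show ?thesis using powr_less_one assms(2) by simp
qed

lemma summable_powr_abs:
  assumes "\<sigma> > 1" shows "summable (\<lambda>n. \<bar>real n powr -\<sigma>\<bar>)"
  using summable_real_powr_iff[of "-\<sigma>"] assms by simp

lemma gC_mult: "gC c \<sigma> (m * n) = gC c \<sigma> m * gC c \<sigma> n"
proof (cases "m = 0 \<or> n = 0")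
  case True then show ?thesis by (auto simp: gC_def)
next
  case False
  then show ?thesis by (auto simp: gC_def prime_factors_product powr_mult)
qed

lemma gC_prime: "prime p \<Longrightarrow> gC c \<sigma> p = (if p mod 3 = c then real p powr -\<sigma> else 0)"
  by (simp add: gC_def prime_prime_factors)

lemma gC_nonneg: "gC c \<sigma> n \<ge> 0" by (simp add: gC_def)

lemma summable_gC: assumes "\<sigma> > 1" shows "summable (\<lambda>n. \<bar>gC c \<sigma> n\<bar>)"
  by (rule summable_comparison_test[OF _ summable_powr_abs[OF assms]]) (auto simp: gC_def)

lemma G_pos: assumes "\<sigma> > 1" shows "G c \<sigma> \<ge> 1"
proof -
  have s: "summable (gC c \<sigma>)" using summable_gC[OF assms] gC_nonneg by simp
  have "(\<Sum>n\<in>{1}. gC c \<sigma> n) \<le> G c \<sigma>" unfolding G_def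
    by (rule sum_le_suminf[OF s]) (auto simp: gC_nonneg)
  then show ?thesis by (simp add: gC_def)
qed

lemma euler_gC:
  assumes "\<sigma> > 1"
  shows "(\<lambda>n. if prime n \<and> n mod 3 = c then inverse (1 - real n powr -\<sigma>) else 1) has_prod G c \<sigma>"
proof -
  have "(\<lambda>n. if prime n then inverse (1 - gC c \<sigma> n) else 1) has_prod (\<Sum>n. gC c \<sigma> n)"
  proof (rule euler_product)
    show "gC c \<sigma> 0 = 0" by (simp add: gC_def)
    show "gC c \<sigma> 1 = 1" by (simp add: gC_def)
    show "gC c \<sigma> (m * n) = gC c \<sigma> m * gC c \<sigma> n" for m n by (rule gC_mult)
    show "summable (\<lambda>n. \<bar>gC c \<sigma> n\<bar>)" by (rule summable_gC[OF assms])
    show "\<bar>gC c \<sigma> p\<bar> < 1" if "prime p" for p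
      using prime_powr_less1[OF that, of \<sigma>] assms by (simp add: gC_prime[OF that])
    show "(\<Sum>n. gC c \<sigma> n) \<noteq> 0" using G_pos[OF assms, of c] by (simp add: G_def)
  qed
  then show ?thesis unfolding G_def
    by (rule has_prod_cong[THEN iffD1, rotated]) (auto simp: gC_prime)
qed

lemma euler_zeta:
  assumes "\<sigma> > 1"
  shows "(\<lambda>n. if prime n then inverse (1 - real n powr -\<sigma>) else 1) has_prod Zt \<sigma>"
  unfolding Zt_def
proof (rule euler_product)
  show "real 0 powr - \<sigma> = 0" by simp
  show "real 1 powr - \<sigma> = 1" by simp
  show "real (m * n) powr - \<sigma> = real m powr - \<sigma> * real n powr - \<sigma>" for m n by (rule powr_mult_nat)
  show "summable (\<lambda>n. \<bar>real n powr - \<sigma>\<bar>)" by (rule summable_powr_abs[OF assms])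
  show "\<bar>real p powr - \<sigma>\<bar> < 1" if "prime p" for p using prime_powr_less1[OF that, of \<sigma>] assms by simp
  have s: "summable (\<lambda>n. real n powr - \<sigma>)" using summable_powr_abs[OF assms] by simp
  have "(\<Sum>n\<in>{1}. real n powr - \<sigma>) \<le> (\<Sum>n. real n powr - \<sigma>)"
    by (rule sum_le_suminf[OF s]) auto
  then show "(\<Sum>n. real n powr - \<sigma>) \<noteq> 0" by simp
qed

definition T :: "real \<Rightarrow> nat \<Rightarrow> real" where
  "T \<sigma> k = real (3*k+1) powr -\<sigma> - real (3*k+2) powr -\<sigma>"

lemma summable_L: assumes "\<sigma> > 1" shows "summable (\<lambda>n. \<bar>chi n * real n powr -\<sigma>\<bar>)"
proof (rule summable_comparison_test[OF _ summable_powr_abs[OF assms]])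
  have "\<bar>chi n * real n powr -\<sigma>\<bar> \<le> \<bar>real n powr -\<sigma>\<bar>" for n
  proof -
    have "\<bar>chi n * real n powr -\<sigma>\<bar> = \<bar>chi n\<bar> * \<bar>real n powr -\<sigma>\<bar>" by (rule abs_mult)
    also have "\<dots> \<le> 1 * \<bar>real n powr -\<sigma>\<bar>" by (rule mult_right_mono[OF abs_chi_le]) simp
    finally show ?thesis by simp
  qed
  then show "\<exists>N. \<forall>n\<ge>N. norm \<bar>chi n * real n powr - \<sigma>\<bar> \<le> \<bar>real n powr - \<sigma>\<bar>" by simp
qed

lemma T_nonneg: assumes "\<sigma> \<ge> 0" shows "T \<sigma> k \<ge> 0"
  unfolding T_def using powr_mono2'[of "-\<sigma>" "real (3*k+1)" "real (3*k+2)"] assms by simp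

lemma chi_3k: "chi (k*3) = 0" "chi (k*3+1) = 1" "chi (k*3+2) = -1"
proof -
  have h: "(k*3) mod 3 = 0" "(k*3+1) mod 3 = 1" "(k*3+2) mod 3 = 2" by presburger+
  show "chi (k*3) = 0" "chi (k*3+1) = 1" "chi (k*3+2) = -1" unfolding chi_def h by simp_all
qed

lemma L_group: assumes "\<sigma> > 1" shows "T \<sigma> sums Lf \<sigma>"
proof -
  have s: "summable (\<lambda>n. chi n * real n powr -\<sigma>)"
    by (rule summable_rabs_cancel[OF summable_L[OF assms]])
  have "(\<lambda>k. \<Sum>i\<in>{k*3..<k*3+3}. chi i * real i powr -\<sigma>) sums Lf \<sigma>"
    unfolding Lf_def by (rule sums_group[OF summable_sums[OF s]]) simp
  moreover have "(\<Sum>i\<in>{k*3..<k*3+3}. chi i * real i powr -\<sigma>) = T \<sigma> k" for k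
  proof -
    have e: "{k*3..<k*3+3} = {k*3, k*3+1, k*3+2}" by auto
    have "(\<Sum>i\<in>{k*3, k*3+1, k*3+2}. chi i * real i powr -\<sigma>)
       = chi (k*3) * real (k*3) powr -\<sigma> + (chi (k*3+1) * real (k*3+1) powr -\<sigma>
          + chi (k*3+2) * real (k*3+2) powr -\<sigma>)"
      by simp
    also have "\<dots> = T \<sigma> k" unfolding chi_3k T_def by (simp add: mult.commute)
    finally show ?thesis using e by simp
  qed
  ultimately show ?thesis by simp
qed

lemma Lf_pos: assumes "\<sigma> > 1" shows "Lf \<sigma> > 0"
proof -
  have sm: "summable (T \<sigma>)" using sums_summable[OF L_group[OF assms]] .
  have "(\<Sum>k\<in>{0}. T \<sigma> k) \<le> suminf (T \<sigma>)"
    by (rule sum_le_suminf[OF sm]) (use T_nonneg assms in auto)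
  then have le: "T \<sigma> 0 \<le> Lf \<sigma>" using sums_unique[OF L_group[OF assms]] by simp
  have "real 2 powr -\<sigma> < real 1 powr -\<sigma>"
    by (rule powr_less_mono2_neg) (use assms in auto)
  then have "T \<sigma> 0 > 0" unfolding T_def by simp
  with le show ?thesis by simp
qed

lemma euler_L:
  assumes "\<sigma> > 1"
  shows "(\<lambda>n. if prime n then inverse (1 - chi n * real n powr -\<sigma>) else 1) has_prod Lf \<sigma>"
  unfolding Lf_def
proof (rule euler_product)
  show "chi 0 * real 0 powr - \<sigma> = 0" by simp
  show "chi 1 * real 1 powr - \<sigma> = 1" by (simp add: chi_def)
  show "chi (m * n) * real (m * n) powr - \<sigma> = chi m * real m powr - \<sigma> * (chi n * real n powr - \<sigma>)" for m n
    by (simp add: chi_mult powr_mult)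
  show "summable (\<lambda>n. \<bar>chi n * real n powr - \<sigma>\<bar>)" by (rule summable_L[OF assms])
  show "\<bar>chi p * real p powr - \<sigma>\<bar> < 1" if "prime p" for p
  proof -
    have "\<bar>chi p * real p powr -\<sigma>\<bar> = \<bar>chi p\<bar> * \<bar>real p powr -\<sigma>\<bar>" by (rule abs_mult)
    also have "\<dots> \<le> 1 * \<bar>real p powr -\<sigma>\<bar>" by (rule mult_right_mono[OF abs_chi_le]) simp
    also have "\<dots> < 1" using prime_powr_less1[OF that, of \<sigma>] assms by simp
    finally show ?thesis .
  qed
  show "(\<Sum>n. chi n * real n powr - \<sigma>) \<noteq> 0" using Lf_pos[OF assms] by (simp add: Lf_def)
qed

lemma prime_mod3_0: assumes "prime (n::nat)" "n mod 3 = 0" shows "n = 3"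
proof -
  have "3 dvd n" using assms(2) by presburger
  then show ?thesis using assms(1) prime_nat_iff by (metis numeral_eq_one_iff semiring_norm(86))
qed

lemma mod3_cases: "(n::nat) mod 3 = 0 \<or> n mod 3 = 1 \<or> n mod 3 = 2" by presburger

lemma A_has_prod:
  "(\<lambda>n. if n = 3 then inverse (1 - real n powr -\<sigma>) else 1) has_prod inverse (1 - 3 powr -\<sigma>)"
  using has_prod_If_finite_set[of "{3}" "\<lambda>n. inverse (1 - real n powr -\<sigma>)"] by simp

lemma zeta_split:
  assumes "\<sigma> > 1"
  shows "Zt \<sigma> = inverse (1 - 3 powr -\<sigma>) * G 1 \<sigma> * G 2 \<sigma>"
proof -
  have h: "(\<lambda>n. (if n = 3 then inverse (1 - real n powr -\<sigma>) else 1)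
     * (if prime n \<and> n mod 3 = 1 then inverse (1 - real n powr -\<sigma>) else 1)
     * (if prime n \<and> n mod 3 = 2 then inverse (1 - real n powr -\<sigma>) else 1))
     has_prod (inverse (1 - 3 powr -\<sigma>) * G 1 \<sigma> * G 2 \<sigma>)"
    by (intro has_prod_mult A_has_prod euler_gC assms)
  have eq: "(if n = 3 then inverse (1 - real n powr -\<sigma>) else 1)
     * (if prime n \<and> n mod 3 = 1 then inverse (1 - real n powr -\<sigma>) else 1)
     * (if prime n \<and> n mod 3 = 2 then inverse (1 - real n powr -\<sigma>) else 1)
     = (if prime n then inverse (1 - real n powr -\<sigma>) else 1)" for n
  proof (cases "prime n")
    case True
    then show ?thesis using mod3_cases[of n] prime_mod3_0[OF True] by auto
  next
    case False
    then have "n \<noteq> 3" by auto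
    with False show ?thesis by simp
  qed
  have "(\<lambda>n. if prime n then inverse (1 - real n powr -\<sigma>) else 1)
     has_prod (inverse (1 - 3 powr -\<sigma>) * G 1 \<sigma> * G 2 \<sigma>)"
    using h eq by simp
  then show ?thesis using has_prod_unique2 euler_zeta[OF assms] by blast
qed

lemma zetaL_split:
  assumes "\<sigma> > 1"
  shows "Zt \<sigma> * Lf \<sigma> = inverse (1 - 3 powr -\<sigma>) * (G 1 \<sigma> * G 1 \<sigma>) * G 2 (2*\<sigma>)"
proof -
  have s2: "2 * \<sigma> > 1" using assms by simp
  have h: "(\<lambda>n. (if n = 3 then inverse (1 - real n powr -\<sigma>) else 1)
     * ((if prime n \<and> n mod 3 = 1 then inverse (1 - real n powr -\<sigma>) else 1)
       * (if prime n \<and> n mod 3 = 1 then inverse (1 - real n powr -\<sigma>) else 1))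
     * (if prime n \<and> n mod 3 = 2 then inverse (1 - real n powr -(2*\<sigma>)) else 1))
     has_prod (inverse (1 - 3 powr -\<sigma>) * (G 1 \<sigma> * G 1 \<sigma>) * G 2 (2*\<sigma>))"
    by (intro has_prod_mult A_has_prod euler_gC assms s2)
  have h2: "(\<lambda>n. (if prime n then inverse (1 - real n powr -\<sigma>) else 1)
      * (if prime n then inverse (1 - chi n * real n powr -\<sigma>) else 1)) has_prod (Zt \<sigma> * Lf \<sigma>)"
    by (intro has_prod_mult euler_zeta euler_L assms)
  have eq: "(if n = 3 then inverse (1 - real n powr -\<sigma>) else 1)
     * ((if prime n \<and> n mod 3 = 1 then inverse (1 - real n powr -\<sigma>) else 1)
       * (if prime n \<and> n mod 3 = 1 then inverse (1 - real n powr -\<sigma>) else 1))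
     * (if prime n \<and> n mod 3 = 2 then inverse (1 - real n powr -(2*\<sigma>)) else 1)
     = (if prime n then inverse (1 - real n powr -\<sigma>) else 1)
      * (if prime n then inverse (1 - chi n * real n powr -\<sigma>) else 1)" for n
  proof (cases "prime n")
    case True
    have sq: "real n powr -(2*\<sigma>) = real n powr -\<sigma> * real n powr -\<sigma>"
      by (simp add: powr_add[symmetric])
    have "1 - real n powr -(2*\<sigma>) = (1 - real n powr -\<sigma>) * (1 + real n powr -\<sigma>)"
      unfolding sq by (simp add: algebra_simps)
    then show ?thesis using mod3_cases[of n] prime_mod3_0[OF True] True
      by (auto simp: chi_def inverse_mult_distrib)
  next
    case False
    then have "n \<noteq> 3" by auto
    with False show ?thesis by simp
  qed
  have "(\<lambda>n. (if prime n then inverse (1 - real n powr -\<sigma>) else 1)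
      * (if prime n then inverse (1 - chi n * real n powr -\<sigma>) else 1))
     has_prod (inverse (1 - 3 powr -\<sigma>) * (G 1 \<sigma> * G 1 \<sigma>) * G 2 (2*\<sigma>))"
    using h eq by simp
  then show ?thesis using has_prod_unique2 h2 by blast
qed

lemma tangent_powr:
  fixes x y t :: real
  assumes x: "x > 0" and y: "y > 0" and t: "t > 0"
  shows "y powr -t \<ge> x powr -t - t * x powr (-t-1) * (y - x)"
proof -
  define q where "q = y / x"
  have q: "q > 0" unfolding q_def using x y by simp
  have e1: "y powr -t = x powr -t * q powr -t"
    unfolding q_def using x y by (simp add: powr_divide)
  have "q powr -t = exp (-t * ln q)" using q by (simp add: powr_def)
  also have "\<dots> \<ge> 1 + (-t * ln q)" by (rule exp_ge_add_one_self)
  finally have a: "q powr -t \<ge> 1 - t * ln q" by simp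
  have "ln q \<le> q - 1" using q by (rule ln_le_minus_one)
  then have "t * ln q \<le> t * (q - 1)" using t by simp
  with a have e2: "q powr -t \<ge> 1 - t * (q - 1)" by simp
  have e3: "x powr (-t-1) = x powr -t / x"
    using x by (simp add: powr_diff)
  have xp: "x powr -t > 0" using x by simp
  have "x powr -t * q powr -t \<ge> x powr -t * (1 - t * (q - 1))"
    using e2 xp by (simp add: mult_left_mono)
  also have "x powr -t * (1 - t * (q - 1)) = x powr -t - t * (x powr -t / x) * (y - x)"
    unfolding q_def using x by (simp add: field_simps)
  finally show ?thesis using e1 e3 by simp
qed

lemma step_lower:
  assumes t: "t > 0" and n: "n \<ge> 1"
  shows "real n powr -(t+1) \<ge> (real n powr -t - real (n+1) powr -t) / t"
proof -
  have "real (n+1) powr -t \<ge> real n powr -t - t * real n powr (-t-1) * (real (n+1) - real n)"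
    by (rule tangent_powr) (use n t in auto)
  then have h: "t * real n powr (-t-1) \<ge> real n powr -t - real (n+1) powr -t" by simp
  have e: "-(t+1) = -t-1" by simp
  show ?thesis unfolding e using h t by (simp add: pos_divide_le_eq mult.commute)
qed

lemma step_upper:
  assumes t: "t > 0" and n: "n \<ge> 2"
  shows "real n powr -(t+1) \<le> (real (n-1) powr -t - real n powr -t) / t"
proof -
  have "real (n-1) powr -t \<ge> real n powr -t - t * real n powr (-t-1) * (real (n-1) - real n)"
    by (rule tangent_powr) (use n t in auto)
  moreover have "real (n-1) - real n = -1" using n by simp
  ultimately have h: "t * real n powr (-t-1) \<le> real (n-1) powr -t - real n powr -t" by simp
  have e: "-(t+1) = -t-1" by simp
  show ?thesis unfolding e using h t by (simp add: pos_le_divide_eq mult.commute)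
qed

lemma zeta_bounds:
  assumes s: "s > 1"
  shows "Zt s \<ge> 1 / (s - 1)" and "Zt s \<le> 1 + 1 / (s - 1)"
proof -
  define t where "t = s - 1"
  have t: "t > 0" using s by (simp add: t_def)
  have st: "s = t + 1" by (simp add: t_def)
  have sm: "summable (\<lambda>n. real n powr -s)" using summable_powr_abs[OF s] by simp
  have nn: "real n powr -s \<ge> 0" for n by simp
  have low: "(\<Sum>n<N+1. real n powr -s) \<ge> (1 - real (N+1) powr -t) / t" for N
  proof (induction N)
    case 0 then show ?case by simp
  next
    case (Suc N)
    have st1: "real (N+1) powr -s \<ge> (real (N+1) powr -t - real (N+2) powr -t) / t"
      using step_lower[OF t, of "N+1"] unfolding st by simp
    have "(\<Sum>n<Suc N + 1. real n powr -s) = (\<Sum>n<N+1. real n powr -s) + real (N+1) powr -s" by simp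
    also have "\<dots> \<ge> (1 - real (N+1) powr -t) / t + (real (N+1) powr -t - real (N+2) powr -t) / t"
      by (rule add_mono[OF Suc.IH st1])
    also have "(1 - real (N+1) powr -t) / t + (real (N+1) powr -t - real (N+2) powr -t) / t
        = (1 - real (N+2) powr -t) / t" by (simp add: diff_divide_distrib)
    finally show ?case by (simp add: add.commute)
  qed
  have lim1: "(\<lambda>N. (1 - real (N+1) powr -t) / t) \<longlonglongrightarrow> (1 - 0) / t"
    by (intro tendsto_intros tendsto_neg_powr filterlim_compose[OF filterlim_real_sequentially])
       (use t in \<open>auto intro: filterlim_Suc\<close>)
  have lim2: "(\<lambda>N. \<Sum>n<N+1. real n powr -s) \<longlonglongrightarrow> Zt s"
    unfolding Zt_def using LIMSEQ_ignore_initial_segment[OF summable_LIMSEQ[OF sm], of 1] by simp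
  have "(1 - 0) / t \<le> Zt s"
    by (rule LIMSEQ_le[OF lim1 lim2]) (use low in auto)
  then show "Zt s \<ge> 1 / (s - 1)" by (simp add: t_def)
  have up: "(\<Sum>n<N+2. real n powr -s) \<le> 1 + (1 - real (N+1) powr -t) / t" for N
  proof (induction N)
    case 0 then show ?case by (simp add: lessThan_Suc)
  next
    case (Suc N)
    have st1: "real (N+2) powr -s \<le> (real (N+1) powr -t - real (N+2) powr -t) / t"
      using step_upper[OF t, of "N+2"] unfolding st by simp
    have "(\<Sum>n<Suc N + 2. real n powr -s) = (\<Sum>n<N+2. real n powr -s) + real (N+2) powr -s" by simp
    also have "\<dots> \<le> 1 + (1 - real (N+1) powr -t) / t + (real (N+1) powr -t - real (N+2) powr -t) / t"
      by (rule add_mono[OF Suc.IH st1])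
    also have "1 + (1 - real (N+1) powr -t) / t + (real (N+1) powr -t - real (N+2) powr -t) / t
        = 1 + (1 - real (N+2) powr -t) / t" by (simp add: diff_divide_distrib)
    finally show ?case by (simp add: add.commute)
  qed
  have up2: "(\<Sum>n<N. real n powr -s) \<le> 1 + 1 / t" for N
  proof -
    have "(\<Sum>n<N. real n powr -s) \<le> (\<Sum>n<N+2. real n powr -s)"
      by (rule sum_mono2) (auto simp: nn)
    also have "\<dots> \<le> 1 + (1 - real (N+1) powr -t) / t" by (rule up)
    also have "\<dots> \<le> 1 + 1 / t" using t by (simp add: divide_right_mono)
    finally show ?thesis .
  qed
  show "Zt s \<le> 1 + 1 / (s - 1)"
    unfolding Zt_def using suminf_le_const[OF sm up2] by (simp add: t_def)
qed

lemma zeta_residue: "((\<lambda>s. (s - 1) * Zt s) \<longlongrightarrow> 1) (at_right 1)"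
proof (rule tendsto_sandwich[of "\<lambda>_. 1" _ _ "\<lambda>s. s"])
  have ev: "eventually (\<lambda>s::real. s > 1) (at_right 1)" by (simp add: eventually_at_right_less)
  show "eventually (\<lambda>s. 1 \<le> (s - 1) * Zt s) (at_right 1)"
    using ev
  proof eventually_elim
    case (elim s)
    then show ?case using zeta_bounds(1)[OF elim] by (simp add: field_simps)
  qed
  show "eventually (\<lambda>s. (s - 1) * Zt s \<le> s) (at_right 1)"
    using ev
  proof eventually_elim
    case (elim s)
    have "(s - 1) * Zt s \<le> (s - 1) * (1 + 1 / (s - 1))"
      using zeta_bounds(2)[OF elim] elim by (simp add: mult_left_mono)
    also have "\<dots> = s" using elim by (simp add: field_simps)
    finally show ?case .
  qed
  show "((\<lambda>s::real. s) \<longlongrightarrow> 1) (at_right 1)" by (rule tendsto_ident_at)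
qed simp

lemma pos_notin_nonpos_Ints: "(x::real) > 0 \<Longrightarrow> complex_of_real x \<notin> \<int>\<^sub>\<le>\<^sub>0"
  using nonpos_Ints_nonpos of_real_in_nonpos_Ints_iff by fastforce

lemma digamma_reflection_third:
  "Digamma (2/3::real) - Digamma (1/3) = pi / sqrt 3"
proof -
  define z0 where "z0 = complex_of_real (1/3)"
  have nz0: "z0 \<notin> \<int>\<^sub>\<le>\<^sub>0" unfolding z0_def by (rule pos_notin_nonpos_Ints) simp
  have 1: "1 - z0 = complex_of_real (2/3)" unfolding z0_def by simp
  have nz1: "1 - z0 \<notin> \<int>\<^sub>\<le>\<^sub>0" unfolding 1 by (rule pos_notin_nonpos_Ints) simp
  have eqf: "(\<lambda>z::complex. Gamma z * Gamma (1 - z)) = (\<lambda>z. of_real pi / sin (of_real pi * z))"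
    by (rule ext, rule Gamma_reflection_complex)
  have d1: "((\<lambda>z. Gamma z * Gamma (1 - z)) has_field_derivative
      (Gamma z0 * Digamma z0 * Gamma (1 - z0) - Gamma z0 * (Gamma (1 - z0) * Digamma (1 - z0)))) (at z0)"
    using nz0 nz1 by (auto intro!: derivative_eq_intros simp: algebra_simps)
  have pz: "of_real pi * z0 = complex_of_real (pi/3)" unfolding z0_def by simp
  have s0: "sin (of_real pi * z0) = of_real (sqrt 3 / 2)"
  proof -
    have "sin (complex_of_real (pi/3)) = complex_of_real (sin (pi/3))" by (rule sin_of_real)
    then show ?thesis unfolding pz sin_60 .
  qed
  have c0: "cos (of_real pi * z0) = of_real (1 / 2)"
  proof -
    have "cos (complex_of_real (pi/3)) = complex_of_real (cos (pi/3))" by (rule cos_of_real)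
    then show ?thesis unfolding pz cos_60 .
  qed
  have sn: "sin (of_real pi * z0) \<noteq> 0" unfolding s0 of_real_eq_0_iff by simp
  have d2: "((\<lambda>z. of_real pi / sin (of_real pi * z)) has_field_derivative
      (- (of_real pi * (cos (of_real pi * z0) * of_real pi)) / (sin (of_real pi * z0))^2)) (at z0)"
    using sn by (auto intro!: derivative_eq_intros simp: power2_eq_square)
  have eqD: "Gamma z0 * Digamma z0 * Gamma (1 - z0) - Gamma z0 * (Gamma (1 - z0) * Digamma (1 - z0))
      = - (of_real pi * (cos (of_real pi * z0) * of_real pi)) / (sin (of_real pi * z0))^2"
    using DERIV_unique[OF d1[unfolded eqf] d2] .
  have GG: "Gamma z0 * Gamma (1 - z0) = of_real pi / sin (of_real pi * z0)"
    by (rule Gamma_reflection_complex)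
  have "(Gamma z0 * Gamma (1 - z0)) * (Digamma z0 - Digamma (1 - z0))
      = - (of_real pi * (cos (of_real pi * z0) * of_real pi)) / (sin (of_real pi * z0))^2"
    using eqD by (simp add: algebra_simps)
  then have "(of_real pi / sin (of_real pi * z0)) * (Digamma z0 - Digamma (1 - z0))
      = - (of_real pi * (cos (of_real pi * z0) * of_real pi)) / (sin (of_real pi * z0))^2"
    unfolding GG .
  then have "Digamma z0 - Digamma (1 - z0) = - of_real pi * cos (of_real pi * z0) / sin (of_real pi * z0)"
  proof -
    assume h: "(of_real pi / sin (of_real pi * z0)) * (Digamma z0 - Digamma (1 - z0))
      = - (of_real pi * (cos (of_real pi * z0) * of_real pi)) / (sin (of_real pi * z0))^2"
    define S where "S = sin (complex_of_real pi * z0)"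
    define C where "C = cos (complex_of_real pi * z0)"
    define P where "P = complex_of_real pi"
    define D where "D = Digamma z0 - Digamma (1 - z0)"
    have Sn: "S \<noteq> 0" using sn unfolding S_def .
    have Pn: "P \<noteq> 0" unfolding P_def by simp
    have "(P / S) * D = - (P * (C * P)) / S^2" using h unfolding S_def C_def P_def D_def .
    then have "(P / S) * D * (S^2 / P) = - (P * (C * P)) / S^2 * (S^2 / P)" by simp
    then have "D * S = - (C * P)" using Sn Pn by (simp add: power2_eq_square field_simps)
    then have "D = - P * C / S" using Sn by (simp add: field_simps)
    then show ?thesis unfolding S_def C_def P_def D_def .
  qed
  also have "\<dots> = complex_of_real (- pi * (1/2) / (sqrt 3 / 2))" unfolding s0 c0 by simp
  finally have "complex_of_real (Digamma (1/3) - Digamma (2/3)) = complex_of_real (- pi * (1/2) / (sqrt 3 / 2))"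
  proof -
    have p1: "Digamma (complex_of_real (1/3)) = complex_of_real (Digamma (1/3))" by (rule Polygamma_of_real) simp
    have p2: "Digamma (complex_of_real (2/3)) = complex_of_real (Digamma (2/3))" by (rule Polygamma_of_real) simp
    assume h: "Digamma z0 - Digamma (1 - z0) = complex_of_real (- pi * (1/2) / (sqrt 3 / 2))"
    then show ?thesis unfolding 1 unfolding z0_def p1 p2 of_real_diff .
  qed
  then have "Digamma (1/3::real) - Digamma (2/3) = - pi * (1/2) / (sqrt 3 / 2)"
    using of_real_eq_iff by blast
  then show ?thesis by (simp add: field_simps)
qed

lemma cont_series:
  fixes t :: "nat \<Rightarrow> real \<Rightarrow> real"
  assumes b: "\<And>k x. x \<in> A \<Longrightarrow> \<bar>t k x\<bar> \<le> M k" and sM: "summable M"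
    and c: "\<And>k. continuous_on A (t k)"
  shows "continuous_on A (\<lambda>x. \<Sum>k. t k x)"
proof (rule uniform_limit_theorem)
  show "\<forall>\<^sub>F n in sequentially. continuous_on A (\<lambda>x. \<Sum>i<n. t i x)"
    by (intro always_eventually allI continuous_on_sum c)
  show "uniform_limit A (\<lambda>n x. \<Sum>i<n. t i x) (\<lambda>x. \<Sum>k. t k x) sequentially"
    by (rule Weierstrass_m_test) (use b sM in auto)
qed simp

lemma summable_shift_powr2: "summable (\<lambda>k. 2 * real (k+1) powr -2)"
proof -
  have "summable (\<lambda>n. real n powr -2)" using summable_real_powr_iff[of "-2"] by simp
  then have "summable (\<lambda>k. real (Suc k) powr -2)" by (subst summable_Suc_iff)
  then show ?thesis using summable_mult[of "\<lambda>k. real (Suc k) powr -2" 2] by simp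
qed

lemma T_bound:
  assumes "\<sigma> \<in> {1..2}" shows "\<bar>T \<sigma> k\<bar> \<le> 2 * real (k+1) powr -2"
proof -
  have s: "\<sigma> \<ge> 1" "\<sigma> \<le> 2" using assms by auto
  define a where "a = real (3*k+1)"
  have a: "a \<ge> 1" unfolding a_def by simp
  have tg: "real (3*k+2) powr -\<sigma> \<ge> a powr -\<sigma> - \<sigma> * a powr (-\<sigma>-1) * (real (3*k+2) - a)"
    by (rule tangent_powr) (use a s in auto)
  have eq: "real (3*k+2) - a = 1" unfolding a_def by simp
  have "real (3*k+2) powr -\<sigma> \<ge> a powr -\<sigma> - \<sigma> * a powr (-\<sigma>-1)" using tg unfolding eq by simp
  moreover have "T \<sigma> k = a powr -\<sigma> - real (3*k+2) powr -\<sigma>" unfolding T_def a_def ..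
  ultimately have "T \<sigma> k \<le> \<sigma> * a powr (-\<sigma>-1)" by simp
  also have "\<dots> \<le> 2 * a powr (-2)"
  proof (rule mult_mono)
    show "a powr (-\<sigma>-1) \<le> a powr (-2)" by (rule powr_mono) (use a s in auto)
  qed (use s in auto)
  also have "\<dots> \<le> 2 * real (k+1) powr -2"
    using powr_mono2'[of "-2" "real (k+1)" a] unfolding a_def by simp
  finally show ?thesis using T_nonneg[of \<sigma> k] s by simp
qed

definition Lc :: "real \<Rightarrow> real" where "Lc \<sigma> = (\<Sum>k. T \<sigma> k)"

lemma Lc_cont: "continuous_on {1..2} Lc"
  unfolding Lc_def
  by (rule cont_series[OF T_bound summable_shift_powr2]) (auto simp: T_def intro!: continuous_intros)

lemma Lf_Lc: "\<sigma> > 1 \<Longrightarrow> Lf \<sigma> = Lc \<sigma>"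
  unfolding Lc_def using sums_unique[OF L_group] by simp

lemma Lc_1: "Lc 1 = pi / (3 * sqrt 3)"
proof -
  have T1: "T 1 k = inverse (1/3 + real k) / 3 - inverse (2/3 + real k) / 3" for k
  proof -
    have e1: "1/3 + real k = real (3*k+1) / 3" by simp
    have e2: "2/3 + real k = real (3*k+2) / 3" by simp
    have aux: "inverse (x / 3) / 3 = inverse x" for x :: real by (simp add: inverse_eq_divide)
    show ?thesis unfolding e1 e2 T_def aux by (simp add: powr_minus)
  qed
  have s1: "summable (\<lambda>n. inverse (real (Suc n)) - inverse (1/3 + real n))"
    using summable_Digamma[of "1/3::real"] by simp
  have s2: "summable (\<lambda>n. inverse (real (Suc n)) - inverse (2/3 + real n))"
    using summable_Digamma[of "2/3::real"] by simp
  have "Digamma (2/3::real) - Digamma (1/3)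
     = (\<Sum>n. inverse (real (Suc n)) - inverse (2/3 + real n)) - (\<Sum>n. inverse (real (Suc n)) - inverse (1/3 + real n))"
    by (simp add: Digamma_def)
  also have "\<dots> = (\<Sum>n. (inverse (real (Suc n)) - inverse (2/3 + real n)) - (inverse (real (Suc n)) - inverse (1/3 + real n)))"
    by (rule suminf_diff[OF s2 s1])
  also have "\<dots> = (\<Sum>n. 3 * T 1 n)" by (simp add: T1)
  also have "\<dots> = 3 * Lc 1" unfolding Lc_def
    by (rule suminf_mult) (rule summable_comparison_test[OF _ summable_shift_powr2], use T_bound in auto)
  finally show ?thesis using digamma_reflection_third by simp
qed

lemma Lf_tendsto: "(Lf \<longlongrightarrow> pi / (3 * sqrt 3)) (at_right 1)"
proof -
  have "(Lc \<longlongrightarrow> Lc 1) (at 1 within {1..2})"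
    using Lc_cont by (simp add: continuous_on_def)
  then have "(Lc \<longlongrightarrow> Lc 1) (at_right 1)"
    using at_within_Icc_at_right[of "1::real" 2] by simp
  moreover have "eventually (\<lambda>s. Lc s = Lf s) (at_right (1::real))"
    by (rule eventually_at_rightI[of 1 2]) (auto simp: Lf_Lc)
  ultimately show ?thesis using Lim_transform_eventually Lc_1 by metis
qed

lemma H_cont: "continuous_on {1..2} (\<lambda>\<sigma>. G 2 (2*\<sigma>))"
  unfolding G_def
proof (rule cont_series[where M = "\<lambda>n. real n powr -2"])
  show "summable (\<lambda>n. real n powr -2)" using summable_real_powr_iff[of "-2"] by simp
  show "\<bar>gC 2 (2 * x) n\<bar> \<le> real n powr - 2" if x: "x \<in> {1..2}" for n x
  proof (cases "n = 0")
    case True then show ?thesis by (simp add: gC_def)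
  next
    case False
    then have "real n powr -(2*x) \<le> real n powr -2" by (intro powr_mono) (use x in auto)
    then show ?thesis by (simp add: gC_def)
  qed
  show "continuous_on {1..2} (\<lambda>x. gC 2 (2 * x) n)" for n
  proof (cases "n = 0")
    case True then show ?thesis by (simp add: gC_def)
  next
    case False
    show ?thesis
    proof (cases "\<forall>p\<in>prime_factors n. p mod 3 = 2")
      case True
      then have e: "(\<lambda>x. gC 2 (2 * x) n) = (\<lambda>x. real n powr -(2*x))" by (simp add: gC_def)
      show ?thesis unfolding e using False by (intro continuous_intros) auto
    next
      case F: False
      have e2: "(\<lambda>x. gC 2 (2 * x) n) = (\<lambda>x. 0)" using F unfolding gC_def by (intro ext) (simp only: if_False)
      show ?thesis unfolding e2 by (rule continuous_on_const)
    qed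
  qed
qed

lemma H_tendsto: "((\<lambda>\<sigma>. G 2 (2*\<sigma>)) \<longlongrightarrow> G 2 2) (at_right 1)"
proof -
  have "((\<lambda>\<sigma>. G 2 (2*\<sigma>)) \<longlongrightarrow> G 2 (2*1)) (at 1 within {1..2})"
    using bspec[OF H_cont[unfolded continuous_on_def], of 1] by simp
  then show ?thesis using at_within_Icc_at_right[of "1::real" 2] by simp
qed

lemma Zt_2: "Zt 2 = pi^2 / 6"
proof -
  have e: "real (Suc n) powr -2 = 1 / (real n + 1)^2" for n
    by (simp add: powr_minus_divide powr_numeral)
  have "(\<lambda>n. real (Suc n) powr -2) sums (pi^2/6)"
    unfolding e using inverse_squares_sums by (simp add: add.commute)
  then have "(\<lambda>n. real n powr -2) sums (pi^2/6 + real 0 powr -2)" by (subst (asm) sums_Suc_iff)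
  then show ?thesis unfolding Zt_def by (simp add: sums_iff)
qed

lemma G12_eq: "prod_p1mod3 (\<lambda>p. inverse (1 - 1 / (real p)\<^sup>2)) = G 1 2"
proof -
  have "(\<lambda>n. if prime n \<and> n mod 3 = 1 then inverse (1 - real n powr -2) else 1) has_prod G 1 2"
    by (rule euler_gC) simp
  moreover have "(if prime n \<and> n mod 3 = 1 then inverse (1 - real n powr -2) else 1)
      = (if prime n \<and> n mod 3 = 1 then inverse (1 - 1 / (real n)\<^sup>2) else 1)" for n
  proof (cases "prime n")
    case True
    then have "real n > 0" using prime_gt_0_nat by simp
    then show ?thesis by (simp add: powr_minus_divide powr_numeral)
  qed simp
  ultimately have "(\<lambda>n. if prime n \<and> n mod 3 = 1 then inverse (1 - 1 / (real n)\<^sup>2) else 1) has_prod G 1 2"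
    by simp
  then show ?thesis unfolding prod_p1mod3_def by (rule has_prod_unique[symmetric])
qed

lemma f_eq:
  assumes s: "s > 1"
  shows "prod_p1mod3 (\<lambda>p. inverse ((1 - 1 / real p powr s)\<^sup>2)) = G 1 s * G 1 s"
proof -
  have h: "(\<lambda>n. (if prime n \<and> n mod 3 = 1 then inverse (1 - real n powr -s) else 1)
      * (if prime n \<and> n mod 3 = 1 then inverse (1 - real n powr -s) else 1)) has_prod (G 1 s * G 1 s)"
    by (intro has_prod_mult euler_gC s)
  moreover have "(if prime n \<and> n mod 3 = 1 then inverse (1 - real n powr -s) else 1)
      * (if prime n \<and> n mod 3 = 1 then inverse (1 - real n powr -s) else 1)
      = (if prime n \<and> n mod 3 = 1 then inverse ((1 - 1 / real n powr s)\<^sup>2) else 1)" for n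
    by (simp add: powr_minus_divide power2_eq_square inverse_mult_distrib)
  ultimately have "(\<lambda>n. if prime n \<and> n mod 3 = 1 then inverse ((1 - 1 / real n powr s)\<^sup>2) else 1)
      has_prod (G 1 s * G 1 s)" by simp
  then show ?thesis unfolding prod_p1mod3_def by (rule has_prod_unique[symmetric])
qed

lemma G22_eq: "G 2 2 = pi^2 / 6 * (8/9) / G 1 2"
proof -
  have "Zt 2 = inverse (1 - 3 powr -2) * G 1 2 * G 2 2" by (rule zeta_split) simp
  moreover have "(3::real) powr -2 = 1/9" by (simp add: powr_minus_divide powr_numeral)
  ultimately have h: "pi^2/6 = (9/8) * G 1 2 * G 2 2" using Zt_2 by simp
  have "G 1 2 \<ge> 1" by (rule G_pos) simp
  then have "G 1 2 \<noteq> 0" by simp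
  then show ?thesis unfolding h by simp
qed

theorem mainTheorem3:
  shows "((\<lambda>s::real. (s - 1) * prod_p1mod3 (\<lambda>p. inverse ((1 - 1 / real p powr s)\<^sup>2)))
           \<longlongrightarrow> sqrt 3 / (2 * pi) * prod_p1mod3 (\<lambda>p. inverse (1 - 1 / (real p)\<^sup>2)))
         (at_right 1)"
proof -
  define K where "K = G 1 2"
  have Kpos: "K \<ge> 1" unfolding K_def by (rule G_pos) simp
  have G22pos: "G 2 2 \<ge> 1" by (rule G_pos) simp
  have lim: "((\<lambda>s. ((s - 1) * Zt s) * Lf s * (1 - 3 powr (-s)) / G 2 (2 * s))
      \<longlongrightarrow> 1 * (pi / (3 * sqrt 3)) * (1 - 3 powr (-1)) / G 2 2) (at_right 1)"
    using G22pos
    by (intro tendsto_intros zeta_residue Lf_tendsto H_tendsto) auto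
  have ev: "eventually (\<lambda>s. ((s - 1) * Zt s) * Lf s * (1 - 3 powr (-s)) / G 2 (2 * s)
      = (s - 1) * prod_p1mod3 (\<lambda>p. inverse ((1 - 1 / real p powr s)\<^sup>2))) (at_right (1::real))"
  proof (rule eventually_at_rightI[of 1 2])
    fix s :: real assume s: "s \<in> {1<..<2}"
    then have s1: "s > 1" by simp
    have z: "Zt s * Lf s = inverse (1 - 3 powr (-s)) * (G 1 s * G 1 s) * G 2 (2 * s)"
      by (rule zetaL_split[OF s1])
    have "3 powr (-s) < 1" using s1 by (intro powr_less_one) auto
    then have n1: "1 - 3 powr (-s) \<noteq> 0" using s1 by simp
    have n2: "G 2 (2 * s) \<noteq> 0" using G_pos[of "2 * s" 2] s1 by simp
    have "((s - 1) * Zt s) * Lf s * (1 - 3 powr (-s)) / G 2 (2 * s)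
        = (s - 1) * (Zt s * Lf s) * (1 - 3 powr (-s)) / G 2 (2 * s)" by simp
    also have "\<dots> = (s - 1) * (G 1 s * G 1 s)" unfolding z using n1 n2 by (simp add: field_simps)
    also have "\<dots> = (s - 1) * prod_p1mod3 (\<lambda>p. inverse ((1 - 1 / real p powr s)\<^sup>2))"
      using f_eq[OF s1] by simp
    finally show "((s - 1) * Zt s) * Lf s * (1 - 3 powr (-s)) / G 2 (2 * s)
      = (s - 1) * prod_p1mod3 (\<lambda>p. inverse ((1 - 1 / real p powr s)\<^sup>2))" .
  qed simp
  have val: "1 * (pi / (3 * sqrt 3)) * (1 - 3 powr (-1)) / G 2 2 = sqrt 3 / (2 * pi) * K"
  proof -
    have p: "(3::real) powr -1 = 1/3" by (simp add: powr_minus_divide)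
    have sq: "sqrt 3 * sqrt 3 = (3::real)" by simp
    have G: "G 2 2 = pi^2 / 6 * (8/9) / K" unfolding K_def by (rule G22_eq)
    have "1 * (pi / (3 * sqrt 3)) * (1 - 3 powr (-1)) / G 2 2 = 3 * K / (2 * sqrt 3 * pi)"
      unfolding p G using Kpos by (simp add: field_simps power2_eq_square)
    also have "\<dots> = sqrt 3 / (2 * pi) * K"
      using sq by (simp add: field_simps)
    finally show ?thesis .
  qed
  show ?thesis
    using Lim_transform_eventually[OF lim ev] unfolding val K_def G12_eq .
qed

end
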